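(* Let $\Delta t>0$, $N\in\mathbb{N}$, $t_i=i\,\Delta t$, $U\subseteq\mathbb{R}^m$, $f:[0,T]\times\mathbb{R}^n\times U\to\mathbb{R}^n$, $\sigma:[0,T]\times\mathbb{R}^n\to\mathbb{R}^{n\times n}$, $\ell:[0,T]\times\mathbb{R}^n\times U\to\mathbb{R}_+$, $g:\mathbb{R}^n\to\mathbb{R}_+$, and a policy $\mu_i:\mathbb{R}^n\to U$. Under a measure $\widetilde{\mathsf{Q}}$ let $W_0^{\mathsf{Q}},\dots,W_{N-1}^{\mathsf{Q}}$ be mutually independent $\mathcal{N}(0,I_n)$ vectors, $X_0=x_0$, $X_{i+1}=X_i+F^\mu_i+\Sigma_iW^{\mathsf{Q}}_i$ with $F^\mu_i=f(t_i,X_i,\mu_i(X_i))\Delta t$, $\Sigma_i=\sigma(t_i,X_i)\sqrt{\Delta t}$, $L^\mu_j=\ell(t_j,X_j,\mu_j(X_j))\Delta t$, $V^\mu_i(X_i)=\mathbf{E}_{\widetilde{\mathsf{Q}}}[\sum_{j=i}^{N-1}L^\mu_j+g(X_N)\mid X_i]$, $Y_i=V^\mu_i(X_i)$. Fix $i$ and let $\widetilde V_{i+1}:\mathbb{R}^n\to\mathbb{R}$ be $C^2$; define $\overline X_{i+1}=X_i+F^\mu_i$, $\overline Y_{i+1}=\widetilde V_{i+1}(\overline X_{i+1})$, $\overline Z_{i+1}=\Sigma_i^\top\partial_x\widetilde V_{i+1}(\overline X_{i+1})$, $\overline M_{i+1}=\Sigma_i^\top\partial_{xx}\widetilde V_{i+1}(\overline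 X_{i+1})\Sigma_i$, $\widetilde Y_{i+1}=\overline Y_{i+1}+\overline Z_{i+1}^\top W^{\mathsf{Q}}_i+\tfrac12W^{\mathsf{Q}\top}_i\overline M_{i+1}W^{\mathsf{Q}}_i$, $\delta^{\mathrm{h.o.t.}}_{i+1}=\widetilde V_{i+1}(X_{i+1})-\widetilde Y_{i+1}$, $\delta^{\widetilde V}_{i+1}=V^\mu_{i+1}(X_{i+1})-\widetilde V_{i+1}(X_{i+1})$, and $$\Delta\widehat Y_i=-L^\mu_i+\overline Z_{i+1}^\top W^{\mathsf{Q}}_i+\tfrac12\operatorname{tr}\big(\overline M_{i+1}(W^{\mathsf{Q}}_iW^{\mathsf{Q}\top}_i-I)\big).$$ Define the two estimators $\widehat Y^{\mathrm{re\text{-}est}}_i:=\widetilde V_{i+1}(X_{i+1})-\Delta\widehat Y_i$ and $\widehat Y^{\mathrm{noiseless}}_i:=\widetilde Y_{i+1}-\Delta\widehat Y_i$. Then their biases are $$\mathbf{E}_{\widetilde{\mathsf{Q}}}[Y_i-\widehat Y^{\mathrm{re\text{-}est}}_i\mid X_i]=\mathbf{E}_{\widetilde{\mathsf{Q}}}[\delta^{\widetilde V}_{i+1}\mid X_i],\qquad \mathbf{E}_{\widetilde{\mathsf{Q}}}[Y_i-\widehat Y^{\mathrm{noiseless}}_i\mid X_i]=\mathbf{E}_{\widetilde{\mathsf{Q}}}[\delta^{\widetilde V}_{i+1}+\delta^{\mathrm{h.o.t.}}_{i+1}\mid X_i],$$ and their conditional variances are $$\operatorname{Var}_{\widetilde{\mathsf{Q}}}[\widehat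 Y^{\mathrm{re\text{-}est}}_i\mid X_i]=\operatorname{Var}_{\widetilde{\mathsf{Q}}}[\delta^{\mathrm{h.o.t.}}_{i+1}\mid X_i],\qquad \operatorname{Var}_{\widetilde{\mathsf{Q}}}[\widehat Y^{\mathrm{noiseless}}_i\mid X_i]=0.$$
   Context: $T=N\Delta t$; $\partial_x$, $\partial_{xx}$ denote gradient and Hessian. All random variables whose conditional expectations/variances appear are assumed square integrable. $W^{\mathsf{Q}}_i$ is independent of $X_i$. *)

theory Defs
  imports "HOL-Probability.Probability"
begin

primrec state_seq ::
  "(real \<Rightarrow> real^'n \<Rightarrow> real^'m \<Rightarrow> real^'n) \<Rightarrow> (real \<Rightarrow> real^'n \<Rightarrow> real^'n^'n)
   \<Rightarrow> (nat \<Rightarrow> real^'n \<Rightarrow> real^'m) \<Rightarrow> real \<Rightarrow> real^'n \<Rightarrow> (nat \<Rightarrow> 'a \<Rightarrow> real^'n)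
   \<Rightarrow> nat \<Rightarrow> 'a \<Rightarrow> real^'n" where
  "state_seq f \<sigma> \<mu> dt x0 W 0 = (\<lambda>\<omega>. x0)"
| "state_seq f \<sigma> \<mu> dt x0 W (Suc j) = (\<lambda>\<omega>.
     let x = state_seq f \<sigma> \<mu> dt x0 W j \<omega>
     in x + dt *\<^sub>R f (real j * dt) x (\<mu> j x) + (sqrt dt *\<^sub>R \<sigma> (real j * dt) x) *v W j \<omega>)"

definition cond_var :: "'a measure \<Rightarrow> 'a measure \<Rightarrow> ('a \<Rightarrow> real) \<Rightarrow> 'a \<Rightarrow> real" where
  "cond_var M F Z = real_cond_exp M F (\<lambda>\<omega>. (Z \<omega> - real_cond_exp M F Z \<omega>)\<^sup>2)"

definition outer :: "real^'n \<Rightarrow> real^'n \<Rightarrow> real^'n^'n" where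
  "outer u v = (\<chi> a b. u $ a * v $ b)"

definition square_integrable :: "'a measure \<Rightarrow> ('a \<Rightarrow> real) \<Rightarrow> bool" where
  "square_integrable M Z \<longleftrightarrow> Z \<in> borel_measurable M \<and> integrable M (\<lambda>\<omega>. (Z \<omega>)\<^sup>2)"

end

theory Submission
  imports Defs
begin

lemma (in prob_space) indep_integral:
  fixes h :: "'x \<times> 'x \<Rightarrow> real"
  assumes ind: "indep_var S X T Y" and hm[measurable]: "h \<in> borel_measurable (S \<Otimes>\<^sub>M T)"
    and int: "integrable M (\<lambda>\<omega>. h (X \<omega>, Y \<omega>))"
  shows "(\<lambda>x. \<integral>\<omega>'. h (x, Y \<omega>') \<partial>M) \<in> borel_measurable S"
    "integrable M (\<lambda>\<omega>. \<integral>\<omega>'. h (X \<omega>, Y \<omega>') \<partial>M)"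
    "(\<integral>\<omega>. h (X \<omega>, Y \<omega>) \<partial>M) = (\<integral>\<omega>. (\<integral>\<omega>'. h (X \<omega>, Y \<omega>') \<partial>M) \<partial>M)"
proof -
  have rv: "random_variable S X" "random_variable T Y" and
    eq: "distr M S X \<Otimes>\<^sub>M distr M T Y = distr M (S \<Otimes>\<^sub>M T) (\<lambda>x. (X x, Y x))"
    using ind unfolding indep_var_distribution_eq by auto
  note [measurable] = rv
  interpret SX: prob_space "distr M S X" by (rule prob_space_distr) fact
  interpret TY: prob_space "distr M T Y" by (rule prob_space_distr) fact
  interpret P: pair_prob_space "distr M S X" "distr M T Y" ..
  have intJ: "integrable (distr M S X \<Otimes>\<^sub>M distr M T Y) h"
    unfolding eq by (subst integrable_distr_eq) (auto simp: int)
  have k: "\<And>x. x \<in> space S \<Longrightarrow> (\<integral>y. h (x, y) \<partial>distr M T Y) = (\<integral>\<omega>'. h (x, Y \<omega>') \<partial>M)"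
    by (subst integral_distr) auto
  have km: "(\<lambda>x. \<integral>y. h (x, y) \<partial>distr M T Y) \<in> borel_measurable S"
    using TY.borel_measurable_lebesgue_integral[of "\<lambda>x y. h (x, y)" S] by simp
  show m: "(\<lambda>x. \<integral>\<omega>'. h (x, Y \<omega>') \<partial>M) \<in> borel_measurable S"
    using km by (rule measurable_cong[THEN iffD1, rotated]) (simp add: k)
  have i1: "integrable (distr M S X) (\<lambda>x. \<integral>y. h (x, y) \<partial>distr M T Y)"
    by (rule P.integrable_fst'[OF intJ])
  have "integrable (distr M S X) (\<lambda>x. \<integral>y. h (x, y) \<partial>distr M T Y) = integrable (distr M S X) (\<lambda>x. \<integral>\<omega>'. h (x, Y \<omega>') \<partial>M)"
    by (rule Bochner_Integration.integrable_cong) (auto simp: k)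
  with i1 have i2: "integrable (distr M S X) (\<lambda>x. \<integral>\<omega>'. h (x, Y \<omega>') \<partial>M)" by simp
  show "integrable M (\<lambda>\<omega>. \<integral>\<omega>'. h (X \<omega>, Y \<omega>') \<partial>M)"
    using i2 m by (subst (asm) integrable_distr_eq) auto
  have "(\<integral>\<omega>. h (X \<omega>, Y \<omega>) \<partial>M) = integral\<^sup>L (distr M (S \<Otimes>\<^sub>M T) (\<lambda>x. (X x, Y x))) h"
    by (subst integral_distr) auto
  also have "\<dots> = (\<integral>x. (\<integral>y. h (x, y) \<partial>distr M T Y) \<partial>distr M S X)"
    unfolding eq[symmetric] by (rule P.integral_fst'[OF intJ, symmetric])
  also have "\<dots> = (\<integral>x. (\<integral>\<omega>'. h (x, Y \<omega>') \<partial>M) \<partial>distr M S X)"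
    by (rule Bochner_Integration.integral_cong) (auto simp: k)
  also have "\<dots> = (\<integral>\<omega>. (\<integral>\<omega>'. h (X \<omega>, Y \<omega>') \<partial>M) \<partial>M)"
    using m by (subst integral_distr) auto
  finally show "(\<integral>\<omega>. h (X \<omega>, Y \<omega>) \<partial>M) = (\<integral>\<omega>. (\<integral>\<omega>'. h (X \<omega>, Y \<omega>') \<partial>M) \<partial>M)" .
qed

lemma (in prob_space) vimage_subalg:
  assumes "C \<in> measurable M S"
  shows "subalgebra M (vimage_algebra (space M) C S)"
  using sets_image_in_sets[OF refl assms] unfolding subalgebra_def by auto

lemma (in prob_space) vimage_sfs:
  assumes "C \<in> measurable M S"
  shows "sigma_finite_subalgebra M (vimage_algebra (space M) C S)"
  by (rule finite_measure_subalgebra_is_sigma_finite)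
     (simp add: finite_measure_subalgebra_def finite_measure_subalgebra_axioms_def vimage_subalg[OF assms] finite_measure_axioms)

lemma (in prob_space) freeze_cond_exp:
  fixes h :: "'x \<times> 'x \<Rightarrow> real"
  assumes ind: "indep_var S C T B" and hm[measurable]: "h \<in> borel_measurable (S \<Otimes>\<^sub>M T)"
    and int: "integrable M (\<lambda>\<omega>. h (C \<omega>, B \<omega>))"
  shows "AE \<omega> in M. real_cond_exp M (vimage_algebra (space M) C S) (\<lambda>\<omega>. h (C \<omega>, B \<omega>)) \<omega>
           = (\<integral>\<omega>'. h (C \<omega>, B \<omega>') \<partial>M)"
proof -
  have rv[measurable]: "random_variable S C" "random_variable T B"
    using ind unfolding indep_var_distribution_eq by auto
  define F where "F = vimage_algebra (space M) C S"
  interpret SF: sigma_finite_subalgebra M F unfolding F_def by (rule vimage_sfs) fact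
  note I = indep_integral[OF ind hm int]
  have CF: "C \<in> measurable F S" unfolding F_def
    by (rule measurable_vimage_algebra1) (use rv in \<open>auto simp: measurable_def\<close>)
  have gF: "(\<lambda>\<omega>. \<integral>\<omega>'. h (C \<omega>, B \<omega>') \<partial>M) \<in> borel_measurable F"
    using measurable_comp[OF CF I(1)] by (simp add: comp_def)
  show ?thesis unfolding F_def[symmetric]
  proof (rule SF.real_cond_exp_charact)
    show "integrable M (\<lambda>\<omega>. h (C \<omega>, B \<omega>))" by fact
    show "integrable M (\<lambda>\<omega>. \<integral>\<omega>'. h (C \<omega>, B \<omega>') \<partial>M)" by (rule I(2))
    show "(\<lambda>\<omega>. \<integral>\<omega>'. h (C \<omega>, B \<omega>') \<partial>M) \<in> borel_measurable F" by fact
    fix A assume "A \<in> sets F"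
    then obtain E where E[measurable]: "E \<in> sets S" and A: "A = C -` E \<inter> space M"
      unfolding F_def using sets_vimage_algebra2[of C "space M" S] rv by (auto simp: measurable_def)
    define h' where "h' = (\<lambda>(c, b). indicator E c * h (c, b))"
    have h'm[measurable]: "h' \<in> borel_measurable (S \<Otimes>\<^sub>M T)" unfolding h'_def by measurable
    have Am: "A \<in> sets M" unfolding A by measurable
    have eqi: "\<And>\<omega>. \<omega> \<in> space M \<Longrightarrow> h' (C \<omega>, B \<omega>) = indicator A \<omega> * h (C \<omega>, B \<omega>)"
      by (auto simp: h'_def A indicator_def)
    have int': "integrable M (\<lambda>\<omega>. h' (C \<omega>, B \<omega>))"
      using integrable_mult_indicator[OF Am int] eqi
      by (subst Bochner_Integration.integrable_cong[OF refl eqi]) auto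
    note I' = indep_integral[OF ind h'm int']
    have "(\<integral>\<omega>\<in>A. h (C \<omega>, B \<omega>) \<partial>M) = (\<integral>\<omega>. h' (C \<omega>, B \<omega>) \<partial>M)"
      unfolding set_lebesgue_integral_def by (rule Bochner_Integration.integral_cong) (auto simp: eqi)
    also have "\<dots> = (\<integral>\<omega>. (\<integral>\<omega>'. h' (C \<omega>, B \<omega>') \<partial>M) \<partial>M)" by (rule I'(3))
    also have "\<dots> = (\<integral>\<omega>\<in>A. (\<integral>\<omega>'. h (C \<omega>, B \<omega>') \<partial>M) \<partial>M)"
      unfolding set_lebesgue_integral_def
      by (rule Bochner_Integration.integral_cong) (auto simp: h'_def A indicator_def)
    finally show "(\<integral>\<omega>\<in>A. h (C \<omega>, B \<omega>) \<partial>M) = (\<integral>\<omega>\<in>A. (\<integral>\<omega>'. h (C \<omega>, B \<omega>') \<partial>M) \<partial>M)" .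
  qed
qed


lemma cont_vec_nth2: "continuous_on UNIV (\<lambda>x::real^'n^'m. x $ i $ j)"
  by (intro linear_continuous_on bounded_linear_compose[OF bounded_linear_vec_nth] bounded_linear_vec_nth)

lemma mv_meas[measurable (raw)]:
  fixes A :: "'a \<Rightarrow> real^'n^'m" and v :: "'a \<Rightarrow> real^'n"
  assumes "A \<in> borel_measurable M" "v \<in> borel_measurable M"
  shows "(\<lambda>x. A x *v v x) \<in> borel_measurable M"
proof (rule borel_measurable_continuous_Pair[OF assms])
  show "continuous_on UNIV (\<lambda>x::(real^'n^'m) \<times> (real^'n). fst x *v snd x)"
    unfolding matrix_vector_mult_def
    by (intro continuous_on_vec_lambda continuous_intros
        continuous_on_compose2[OF cont_vec_nth2 continuous_on_fst]
        continuous_on_compose2[OF linear_continuous_on[OF bounded_linear_vec_nth] continuous_on_snd]) auto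
qed

lemma vec_nth_meas[measurable (raw)]:
  fixes v :: "'a \<Rightarrow> real^'n"
  assumes "v \<in> borel_measurable M"
  shows "(\<lambda>x. v x $ i) \<in> borel_measurable M"
  by (rule borel_measurable_continuous_on[OF linear_continuous_on[OF bounded_linear_vec_nth] assms])

lemma vec_nth_meas2[measurable (raw)]:
  fixes v :: "'a \<Rightarrow> real^'n^'m"
  assumes "v \<in> borel_measurable M"
  shows "(\<lambda>x. v x $ i $ j) \<in> borel_measurable M"
  by (rule borel_measurable_continuous_on[OF cont_vec_nth2 assms])

lemma mm_meas[measurable (raw)]:
  fixes A :: "'a \<Rightarrow> real^'n^'m" and B :: "'a \<Rightarrow> real^'p^'n"
  assumes "A \<in> borel_measurable M" "B \<in> borel_measurable M"
  shows "(\<lambda>x. A x ** B x) \<in> borel_measurable M"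
proof (rule borel_measurable_continuous_Pair[OF assms])
  show "continuous_on UNIV (\<lambda>x::(real^'n^'m) \<times> (real^'p^'n). fst x ** snd x)"
    unfolding matrix_matrix_mult_def
    by (intro continuous_on_vec_lambda continuous_intros
        continuous_on_compose2[OF cont_vec_nth2 continuous_on_fst]
        continuous_on_compose2[OF cont_vec_nth2 continuous_on_snd]) auto
qed

lemma transpose_meas[measurable (raw)]:
  fixes A :: "'a \<Rightarrow> real^'n^'m"
  assumes "A \<in> borel_measurable M"
  shows "(\<lambda>x. transpose (A x)) \<in> borel_measurable M"
proof (rule borel_measurable_continuous_on[OF _ assms])
  show "continuous_on UNIV (\<lambda>x::(real^'n^'m). transpose x)"
    unfolding transpose_def
    by (intro continuous_on_vec_lambda cont_vec_nth2)
qed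

lemma outer_meas[measurable (raw)]:
  fixes u v :: "'a \<Rightarrow> real^'n"
  assumes "u \<in> borel_measurable M" "v \<in> borel_measurable M"
  shows "(\<lambda>x. outer (u x) (v x)) \<in> borel_measurable M"
proof (rule borel_measurable_continuous_Pair[OF assms])
  show "continuous_on UNIV (\<lambda>x::(real^'n) \<times> (real^'n). outer (fst x) (snd x))"
    unfolding outer_def
    by (intro continuous_on_vec_lambda continuous_intros
        continuous_on_compose2[OF linear_continuous_on[OF bounded_linear_vec_nth] continuous_on_fst]
        continuous_on_compose2[OF linear_continuous_on[OF bounded_linear_vec_nth] continuous_on_snd]) auto
qed

lemma trace_meas[measurable (raw)]:
  fixes A :: "'a \<Rightarrow> real^'n^'n"
  assumes [measurable]: "A \<in> borel_measurable M"
  shows "(\<lambda>x. trace (A x)) \<in> borel_measurable M"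
  unfolding trace_def by measurable


lemma (in prob_space) gauss_mom:
  assumes D: "distributed M lborel Z (\<lambda>x. ennreal (std_normal_density x))"
  shows "integrable M Z" "expectation Z = 0"
    "integrable M (\<lambda>\<omega>. Z \<omega> * Z \<omega>)" "expectation (\<lambda>\<omega>. Z \<omega> * Z \<omega>) = 1"
proof -
  have i1: "integrable lborel (\<lambda>x. std_normal_density x * x)"
    using integrable_std_normal_moment[of 1] by simp
  show "integrable M Z"
    using distributed_integrable[OF D, of "\<lambda>x. x"] i1 by simp
  show "expectation Z = 0" by (rule standard_normal_distributed_expectation[OF D])
  have i2: "integrable lborel (\<lambda>x. std_normal_density x * (x * x))"
    using integrable_std_normal_moment[of 2] by (simp add: power2_eq_square)
  show "integrable M (\<lambda>\<omega>. Z \<omega> * Z \<omega>)"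
    using distributed_integrable[OF D, of "\<lambda>x. x * x"] i2 by simp
  have "(\<integral>x. std_normal_density x * (x * x) \<partial>lborel) = 1"
    using integral_std_normal_moment_even[of 1] by (simp add: power2_eq_square)
  then show "expectation (\<lambda>\<omega>. Z \<omega> * Z \<omega>) = 1"
    using distributed_integral[OF D, of "\<lambda>x. x * x"] by simp
qed

lemma (in prob_space) indep_vars_pair:
  assumes ind: "indep_vars (\<lambda>_. N) X I" and ab: "a \<in> I" "b \<in> I" "a \<noteq> b"
  shows "indep_var N (X a) N (X b)"
proof -
  have "indep_var (PiM {a} (\<lambda>_. N)) (\<lambda>\<omega>. restrict (\<lambda>i. X i \<omega>) {a}) (PiM {b} (\<lambda>_. N)) (\<lambda>\<omega>. restrict (\<lambda>i. X i \<omega>) {b})"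
    by (rule indep_var_restrict[OF ind]) (use ab in auto)
  from indep_var_compose[OF this measurable_component_singleton measurable_component_singleton, of a b]
  show ?thesis by (simp add: comp_def)
qed

lemma trace_outer_expand:
  fixes Mx :: "real^'n^'n" and w :: "real^'n"
  shows "trace (Mx ** (outer w w - mat 1)) = (\<Sum>a\<in>UNIV. \<Sum>b\<in>UNIV. Mx $ a $ b * (w $ b * w $ a - (if b = a then 1 else 0)))"
  by (simp add: trace_def matrix_matrix_mult_def outer_def mat_def)

lemma (in prob_space) gauss_vec:
  fixes W :: "'a \<Rightarrow> real^'n"
  assumes ind: "indep_vars (\<lambda>_. borel) (\<lambda>k \<omega>. W \<omega> $ k) UNIV"
    and D: "\<And>k. distributed M lborel (\<lambda>\<omega>. W \<omega> $ k) (\<lambda>x. ennreal (std_normal_density x))"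
  shows "integrable M (\<lambda>\<omega>. z \<bullet> W \<omega> + 1/2 * trace (Mx ** (outer (W \<omega>) (W \<omega>) - mat 1)))"
    "expectation (\<lambda>\<omega>. z \<bullet> W \<omega> + 1/2 * trace (Mx ** (outer (W \<omega>) (W \<omega>) - mat 1))) = 0"
proof -
  note G = gauss_mom[OF D]
  have pair: "integrable M (\<lambda>\<omega>. W \<omega> $ b * W \<omega> $ a) \<and> expectation (\<lambda>\<omega>. W \<omega> $ b * W \<omega> $ a) = (if b = a then 1 else 0)" for a b
  proof (cases "b = a")
    case True then show ?thesis using G(3,4)[of a] by simp
  next
    case False
    have iv: "indep_var borel (\<lambda>\<omega>. W \<omega> $ b) borel (\<lambda>\<omega>. W \<omega> $ a)"
      using indep_vars_pair[OF ind, of b a] False by simp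
    show ?thesis using indep_var_lebesgue_integral[OF iv G(1) G(1)] indep_var_integrable[OF iv G(1) G(1)] G(2) False by simp
  qed
  have eq: "(\<lambda>\<omega>. z \<bullet> W \<omega> + 1/2 * trace (Mx ** (outer (W \<omega>) (W \<omega>) - mat 1))) =
     (\<lambda>\<omega>. (\<Sum>k\<in>UNIV. z $ k * W \<omega> $ k) + 1/2 * (\<Sum>a\<in>UNIV. \<Sum>b\<in>UNIV. Mx $ a $ b * (W \<omega> $ b * W \<omega> $ a - (if b = a then 1 else 0))))"
    by (simp add: trace_outer_expand inner_vec_def)
  have ib0: "integrable M (\<lambda>\<omega>. W \<omega> $ b * W \<omega> $ a - (if b = a then 1 else 0))" for a b
      using pair[of b a] by (intro Bochner_Integration.integrable_diff) auto
  have ib: "integrable M (\<lambda>\<omega>. Mx $ a $ b * (W \<omega> $ b * W \<omega> $ a - (if b = a then 1 else 0)))" for a b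
    by (rule integrable_mult_right[OF ib0])
  show "integrable M (\<lambda>\<omega>. z \<bullet> W \<omega> + 1/2 * trace (Mx ** (outer (W \<omega>) (W \<omega>) - mat 1)))"
    unfolding eq by (intro Bochner_Integration.integrable_add integrable_mult_right Bochner_Integration.integrable_sum G(1) ib0)
  have "expectation (\<lambda>\<omega>. Mx $ a $ b * (W \<omega> $ b * W \<omega> $ a - (if b = a then 1 else 0))) = 0" for a b
    using pair[of b a] by (simp add: Bochner_Integration.integral_diff prob_space)
  have e0: "expectation (\<lambda>\<omega>. W \<omega> $ b * W \<omega> $ a - (if b = a then 1 else 0)) = 0" for a b
    using pair[of b a] by (simp add: Bochner_Integration.integral_diff prob_space)
  have i0: "integrable M (\<lambda>\<omega>. \<Sum>k\<in>UNIV. z $ k * W \<omega> $ k)"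
    by (intro Bochner_Integration.integrable_sum integrable_mult_right G(1))
  have i1: "integrable M (\<lambda>\<omega>. 1/2 * (\<Sum>a\<in>UNIV. \<Sum>b\<in>UNIV. Mx $ a $ b * (W \<omega> $ b * W \<omega> $ a - (if b = a then 1 else 0))))"
    by (intro Bochner_Integration.integrable_sum integrable_mult_right ib0)
  have "expectation (\<lambda>\<omega>. (\<Sum>k\<in>UNIV. z $ k * W \<omega> $ k) + 1/2 * (\<Sum>a\<in>UNIV. \<Sum>b\<in>UNIV. Mx $ a $ b * (W \<omega> $ b * W \<omega> $ a - (if b = a then 1 else 0))))
     = expectation (\<lambda>\<omega>. \<Sum>k\<in>UNIV. z $ k * W \<omega> $ k) + expectation (\<lambda>\<omega>. 1/2 * (\<Sum>a\<in>UNIV. \<Sum>b\<in>UNIV. Mx $ a $ b * (W \<omega> $ b * W \<omega> $ a - (if b = a then 1 else 0))))"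
    by (rule Bochner_Integration.integral_add[OF i0 i1])
  also have "expectation (\<lambda>\<omega>. \<Sum>k\<in>UNIV. z $ k * W \<omega> $ k) = 0"
    using G(1,2) by (subst Bochner_Integration.integral_sum) auto
  also have "expectation (\<lambda>\<omega>. 1/2 * (\<Sum>a\<in>UNIV. \<Sum>b\<in>UNIV. Mx $ a $ b * (W \<omega> $ b * W \<omega> $ a - (if b = a then 1 else 0)))) = 0"
  proof -
    have "expectation (\<lambda>\<omega>. \<Sum>a\<in>UNIV. \<Sum>b\<in>UNIV. Mx $ a $ b * (W \<omega> $ b * W \<omega> $ a - (if b = a then 1 else 0)))
       = (\<Sum>a\<in>UNIV. \<Sum>b\<in>UNIV. expectation (\<lambda>\<omega>. Mx $ a $ b * (W \<omega> $ b * W \<omega> $ a - (if b = a then 1 else 0))))"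
      using ib by (simp add: Bochner_Integration.integral_sum Bochner_Integration.integrable_sum)
    then show ?thesis using e0 by simp
  qed
  finally show "expectation (\<lambda>\<omega>. z \<bullet> W \<omega> + 1/2 * trace (Mx ** (outer (W \<omega>) (W \<omega>) - mat 1))) = 0"
    unfolding eq by simp
qed


lemma sq_int:
  assumes P: "prob_space M" and sq: "square_integrable M Z"
  shows "integrable M Z"
proof -
  interpret prob_space M by (rule P)
  have m[measurable]: "Z \<in> borel_measurable M" and i: "integrable M (\<lambda>x. (Z x)\<^sup>2)"
    using sq unfolding square_integrable_def by auto
  have b: "\<bar>z\<bar> \<le> 1 + z\<^sup>2" for z :: real
  proof -
    have "0 \<le> (\<bar>z\<bar> - 1)\<^sup>2" by simp
    then show ?thesis by (simp add: power2_eq_square algebra_simps)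
  qed
  show ?thesis
    by (rule Bochner_Integration.integrable_bound[of _ "\<lambda>x. 1 + (Z x)\<^sup>2"]) (use i b in auto)
qed

primrec trj :: "(real \<Rightarrow> real^'n \<Rightarrow> real^'m \<Rightarrow> real^'n) \<Rightarrow> (real \<Rightarrow> real^'n \<Rightarrow> real^'n^'n)
   \<Rightarrow> (nat \<Rightarrow> real^'n \<Rightarrow> real^'m) \<Rightarrow> real \<Rightarrow> ('a \<Rightarrow> real^'n) \<Rightarrow> (nat \<Rightarrow> 'a \<Rightarrow> real^'n)
   \<Rightarrow> nat \<Rightarrow> nat \<Rightarrow> 'a \<Rightarrow> real^'n" where
  "trj f \<sigma> \<mu> dt st W off 0 = st"
| "trj f \<sigma> \<mu> dt st W off (Suc m) = (\<lambda>\<omega>.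
     let x = trj f \<sigma> \<mu> dt st W off m \<omega>
     in x + dt *\<^sub>R f (real (off + m) * dt) x (\<mu> (off + m) x) + (sqrt dt *\<^sub>R \<sigma> (real (off + m) * dt) x) *v W (off + m) \<omega>)"

lemma state_seq_trj: "state_seq f \<sigma> \<mu> dt x0 W j = trj f \<sigma> \<mu> dt (\<lambda>_. x0) W 0 j"
  by (induction j) auto

lemma trj_shift: "trj f \<sigma> \<mu> dt st W 0 (s + m) = trj f \<sigma> \<mu> dt (trj f \<sigma> \<mu> dt st W 0 s) W s m"
  by (induction m) auto

lemma trj_dep:
  assumes "st \<omega> = st' \<omega>'" "\<And>k. k < m \<Longrightarrow> W (off + k) \<omega> = W' (off + k) \<omega>'"
  shows "trj f \<sigma> \<mu> dt st W off m \<omega> = trj f \<sigma> \<mu> dt st' W' off m \<omega>'"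
  using assms by (induction m) (auto simp: Let_def)

lemma meas_f3:
  fixes f :: "real \<Rightarrow> real^'n \<Rightarrow> real^'m \<Rightarrow> 'z::topological_space" and a :: "'k \<Rightarrow> real"
    and b :: "'k \<Rightarrow> real^'n" and c :: "'k \<Rightarrow> real^'m"
  assumes fm: "(\<lambda>(t, x, u). f t x u) \<in> borel_measurable borel"
    and a: "a \<in> borel_measurable K" and b: "b \<in> borel_measurable K" and c: "c \<in> borel_measurable K"
  shows "(\<lambda>\<omega>. f (a \<omega>) (b \<omega>) (c \<omega>)) \<in> borel_measurable K"
  using measurable_comp[OF borel_measurable_Pair[OF a borel_measurable_Pair[OF b c]] fm] by (simp add: comp_def)

lemma meas_f2:
  fixes f :: "real \<Rightarrow> real^'n \<Rightarrow> 'z::topological_space" and a :: "'k \<Rightarrow> real"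
    and b :: "'k \<Rightarrow> real^'n"
  assumes fm: "(\<lambda>(t, x). f t x) \<in> borel_measurable borel"
    and a: "a \<in> borel_measurable K" and b: "b \<in> borel_measurable K"
  shows "(\<lambda>\<omega>. f (a \<omega>) (b \<omega>)) \<in> borel_measurable K"
  using measurable_comp[OF borel_measurable_Pair[OF a b] fm] by (simp add: comp_def)

lemma trj_meas:
  fixes f :: "real \<Rightarrow> real^'n \<Rightarrow> real^'m \<Rightarrow> real^'n"
  assumes fm: "(\<lambda>(t, x, u). f t x u) \<in> borel_measurable borel"
    and sm: "(\<lambda>(t, x). \<sigma> t x) \<in> borel_measurable borel"
    and mum: "\<forall>j. \<mu> j \<in> borel_measurable borel"
    and st: "st \<in> borel_measurable K" and Wm: "\<And>k. k < m \<Longrightarrow> W (off + k) \<in> borel_measurable K"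
  shows "trj f \<sigma> \<mu> dt st W off m \<in> borel_measurable K"
  using Wm
proof (induction m)
  case 0 then show ?case using st by simp
next
  case (Suc m)
  have xm[measurable]: "trj f \<sigma> \<mu> dt st W off m \<in> borel_measurable K" using Suc by auto
  have wm[measurable]: "W (off + m) \<in> borel_measurable K" using Suc by auto
  have mu[measurable]: "(\<lambda>\<omega>. \<mu> (off + m) (trj f \<sigma> \<mu> dt st W off m \<omega>)) \<in> borel_measurable K"
    using measurable_comp[OF xm mum[rule_format]] by (simp add: comp_def)
  have f1[measurable]: "(\<lambda>\<omega>. f (real (off + m) * dt) (trj f \<sigma> \<mu> dt st W off m \<omega>) (\<mu> (off + m) (trj f \<sigma> \<mu> dt st W off m \<omega>))) \<in> borel_measurable K"
    by (rule meas_f3[OF fm]) auto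
  have s1[measurable]: "(\<lambda>\<omega>. \<sigma> (real (off + m) * dt) (trj f \<sigma> \<mu> dt st W off m \<omega>)) \<in> borel_measurable K"
    by (rule meas_f2[OF sm]) auto
  show ?case unfolding trj.simps Let_def by measurable
qed

lemma quad_trace:
  fixes Mx :: "real^'n^'n" and w :: "real^'n"
  shows "w \<bullet> (Mx *v w) = trace (Mx ** (outer w w - mat 1)) + trace Mx"
proof -
  have "trace (Mx ** (outer w w - mat 1)) = (\<Sum>a\<in>UNIV. \<Sum>b\<in>UNIV. Mx $ a $ b * (w $ b * w $ a - (if b = a then 1 else 0)))"
    by (simp add: trace_def matrix_matrix_mult_def outer_def mat_def)
  also have "\<dots> = (\<Sum>a\<in>UNIV. \<Sum>b\<in>UNIV. Mx $ a $ b * w $ b * w $ a) - (\<Sum>a\<in>UNIV. Mx $ a $ a)"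
  proof -
    have e: "\<And>a b. Mx$a$b * (w$b*w$a - (if b = a then 1 else 0)) = Mx$a$b*w$b*w$a - (if a = b then Mx$a$a else 0)"
      by (auto simp: algebra_simps)
    show ?thesis unfolding e sum_subtractf by simp
  qed
  also have "(\<Sum>a\<in>UNIV. \<Sum>b\<in>UNIV. Mx $ a $ b * w $ b * w $ a) = w \<bullet> (Mx *v w)"
    by (simp add: inner_vec_def matrix_vector_mult_def sum_distrib_left mult_ac)
  finally show ?thesis by (simp add: trace_def)
qed

theorem theorem3p2:
  fixes M :: "'a measure" and dt :: real and N i :: nat and U :: "(real^'m) set"
    and f :: "real \<Rightarrow> real^'n \<Rightarrow> real^'m \<Rightarrow> real^'n"
    and \<sigma> :: "real \<Rightarrow> real^'n \<Rightarrow> real^'n^'n"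
    and ell :: "real \<Rightarrow> real^'n \<Rightarrow> real^'m \<Rightarrow> real"
    and g :: "real^'n \<Rightarrow> real"
    and \<mu> :: "nat \<Rightarrow> real^'n \<Rightarrow> real^'m"
    and x0 :: "real^'n" and W :: "nat \<Rightarrow> 'a \<Rightarrow> real^'n"
    and Vt :: "real^'n \<Rightarrow> real" and DVt :: "real^'n \<Rightarrow> real^'n"
    and D2Vt :: "real^'n \<Rightarrow> real^'n^'n"
  defines "X \<equiv> state_seq f \<sigma> \<mu> dt x0 W"
  defines "L \<equiv> \<lambda>j \<omega>. ell (real j * dt) (X j \<omega>) (\<mu> j (X j \<omega>)) * dt"
  defines "S \<equiv> \<lambda>j \<omega>. (\<Sum>k\<in>{j..<N}. L k \<omega>) + g (X N \<omega>)"
  defines "G \<equiv> \<lambda>j. vimage_algebra (space M) (X j) borel"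
  defines "Y \<equiv> \<lambda>j. real_cond_exp M (G j) (S j)"
  defines "F \<equiv> \<lambda>\<omega>. dt *\<^sub>R f (real i * dt) (X i \<omega>) (\<mu> i (X i \<omega>))"
  defines "Sig \<equiv> \<lambda>\<omega>. sqrt dt *\<^sub>R \<sigma> (real i * dt) (X i \<omega>)"
  defines "Xbar \<equiv> \<lambda>\<omega>. X i \<omega> + F \<omega>"
  defines "Ybar \<equiv> \<lambda>\<omega>. Vt (Xbar \<omega>)"
  defines "Zbar \<equiv> \<lambda>\<omega>. transpose (Sig \<omega>) *v DVt (Xbar \<omega>)"
  defines "Mbar \<equiv> \<lambda>\<omega>. transpose (Sig \<omega>) ** D2Vt (Xbar \<omega>) ** Sig \<omega>"
  defines "Ytil \<equiv> \<lambda>\<omega>. Ybar \<omega> + Zbar \<omega> \<bullet> W i \<omega> + 1/2 * (W i \<omega> \<bullet> (Mbar \<omega> *v W i \<omega>))"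
  defines "dhot \<equiv> \<lambda>\<omega>. Vt (X (Suc i) \<omega>) - Ytil \<omega>"
  defines "dV \<equiv> \<lambda>\<omega>. Y (Suc i) \<omega> - Vt (X (Suc i) \<omega>)"
  defines "DY \<equiv> \<lambda>\<omega>. - L i \<omega> + Zbar \<omega> \<bullet> W i \<omega>
                 + 1/2 * trace (Mbar \<omega> ** (outer (W i \<omega>) (W i \<omega>) - mat 1))"
  defines "Yre \<equiv> \<lambda>\<omega>. Vt (X (Suc i) \<omega>) - DY \<omega>"
  defines "Ynl \<equiv> \<lambda>\<omega>. Ytil \<omega> - DY \<omega>"
  assumes P: "prob_space M"
    and dt_pos: "dt > 0" and i_lt: "i < N"
    and mu_U: "\<forall>j x. \<mu> j x \<in> U"
    and l_nonneg: "\<forall>t\<in>{0..real N * dt}. \<forall>x. \<forall>u\<in>U. 0 \<le> ell t x u"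
    and g_nonneg: "\<forall>x. 0 \<le> g x"
    and f_meas: "(\<lambda>(t, x, u). f t x u) \<in> borel_measurable borel"
    and sigma_meas: "(\<lambda>(t, x). \<sigma> t x) \<in> borel_measurable borel"
    and l_meas: "(\<lambda>(t, x, u). ell t x u) \<in> borel_measurable borel"
    and g_meas: "g \<in> borel_measurable borel"
    and mu_meas: "\<forall>j. \<mu> j \<in> borel_measurable borel"
    and W_indep: "prob_space.indep_vars M (\<lambda>_. borel) W {..<N}"
    and W_comp_indep: "\<forall>j<N. prob_space.indep_vars M (\<lambda>_. borel) (\<lambda>k \<omega>. W j \<omega> $ k) UNIV"
    and W_gauss: "\<forall>j<N. \<forall>k. distributed M lborel (\<lambda>\<omega>. W j \<omega> $ k) (\<lambda>x. ennreal (std_normal_density x))"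
    and Vt_D1: "\<forall>x. (Vt has_derivative (\<lambda>h. DVt x \<bullet> h)) (at x)"
    and Vt_D2: "\<forall>x. (DVt has_derivative (\<lambda>h. D2Vt x *v h)) (at x)"
    and Vt_C2: "continuous_on UNIV D2Vt"
    and sq_S: "\<forall>j\<le>N. square_integrable M (S j)"
    and sq_Vt: "square_integrable M (\<lambda>\<omega>. Vt (X (Suc i) \<omega>))"
    and sq_Ytil: "square_integrable M Ytil"
    and sq_DY: "square_integrable M DY"
  shows "(AE \<omega> in M. real_cond_exp M (G i) (\<lambda>\<omega>. Y i \<omega> - Yre \<omega>) \<omega>
                    = real_cond_exp M (G i) dV \<omega>)
       \<and> (AE \<omega> in M. real_cond_exp M (G i) (\<lambda>\<omega>. Y i \<omega> - Ynl \<omega>) \<omega>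
                    = real_cond_exp M (G i) (\<lambda>\<omega>. dV \<omega> + dhot \<omega>) \<omega>)
       \<and> (AE \<omega> in M. cond_var M (G i) Yre \<omega> = cond_var M (G i) dhot \<omega>)
       \<and> (AE \<omega> in M. cond_var M (G i) Ynl \<omega> = 0)"
proof -
  interpret prob_space M by (rule P)
  have Wm[measurable]: "\<And>j. j < N \<Longrightarrow> W j \<in> borel_measurable M"
    using W_indep unfolding indep_vars_def by auto
  have Vt_cont: "continuous_on UNIV Vt"
    using Vt_D1 by (meson has_derivative_continuous continuous_at_imp_continuous_on)
  have DVt_cont: "continuous_on UNIV DVt"
    using Vt_D2 by (meson has_derivative_continuous continuous_at_imp_continuous_on)
  have Vtm[measurable]: "Vt \<in> borel_measurable borel" by (rule borel_measurable_continuous_onI[OF Vt_cont])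
  have DVtm[measurable]: "DVt \<in> borel_measurable borel" by (rule borel_measurable_continuous_onI[OF DVt_cont])
  have D2Vtm[measurable]: "D2Vt \<in> borel_measurable borel" by (rule borel_measurable_continuous_onI[OF Vt_C2])
  have gm[measurable]: "g \<in> borel_measurable borel" by (rule g_meas)
  have mum[measurable]: "\<And>j. \<mu> j \<in> borel_measurable borel" using mu_meas by auto
  have Xtrj: "\<And>j. X j = trj f \<sigma> \<mu> dt (\<lambda>_. x0) W 0 j" unfolding X_def by (rule state_seq_trj)
  have Xm[measurable]: "\<And>j. j \<le> N \<Longrightarrow> X j \<in> borel_measurable M"
    unfolding Xtrj by (rule trj_meas[OF f_meas sigma_meas mu_meas]) auto
  define lf where "lf = (\<lambda>x. ell (real i * dt) x (\<mu> i x) * dt)"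
  define sg where "sg = (\<lambda>x. sqrt dt *\<^sub>R \<sigma> (real i * dt) x)"
  define xb where "xb = (\<lambda>x. x + dt *\<^sub>R f (real i * dt) x (\<mu> i x))"
  define zf where "zf = (\<lambda>x. transpose (sg x) *v DVt (xb x))"
  define mf where "mf = (\<lambda>x. transpose (sg x) ** D2Vt (xb x) ** sg x)"
  have lfm[measurable]: "lf \<in> borel_measurable borel"
    unfolding lf_def by (intro borel_measurable_times meas_f3[OF l_meas]) auto
  have sgm[measurable]: "sg \<in> borel_measurable borel"
    unfolding sg_def by (intro borel_measurable_scaleR meas_f2[OF sigma_meas]) auto
  have xbm[measurable]: "xb \<in> borel_measurable borel"
    unfolding xb_def by (intro borel_measurable_add borel_measurable_scaleR meas_f3[OF f_meas]) auto
  have zfm[measurable]: "zf \<in> borel_measurable borel"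
    unfolding zf_def by measurable
  have mfm[measurable]: "mf \<in> borel_measurable borel"
    unfolding mf_def by measurable
  have Li: "L i = (\<lambda>\<omega>. lf (X i \<omega>))" unfolding L_def lf_def by simp
  have Zb: "Zbar = (\<lambda>\<omega>. zf (X i \<omega>))"
    unfolding Zbar_def zf_def sg_def xb_def Sig_def Xbar_def F_def by simp
  have Mb: "Mbar = (\<lambda>\<omega>. mf (X i \<omega>))"
    unfolding Mbar_def mf_def sg_def xb_def Sig_def Xbar_def F_def by simp
  have Yb: "Ybar = (\<lambda>\<omega>. Vt (xb (X i \<omega>)))"
    unfolding Ybar_def xb_def Xbar_def F_def by simp
  define h2 where "h2 = (\<lambda>p::(real^'n) \<times> (real^'n). - lf (fst p) + (zf (fst p) \<bullet> snd p + 1/2 * trace (mf (fst p) ** (outer (snd p) (snd p) - mat 1))))"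
  have h2m[measurable]: "h2 \<in> borel_measurable (borel \<Otimes>\<^sub>M borel)"
    unfolding h2_def by measurable
  have DYh: "DY = (\<lambda>\<omega>. h2 (X i \<omega>, W i \<omega>))"
    unfolding DY_def h2_def Li Zb Mb by (simp add: fun_eq_iff algebra_simps)
  note quad = quad_trace
  have Ynl_eq: "Ynl = (\<lambda>\<omega>. Vt (xb (X i \<omega>)) + lf (X i \<omega>) + 1/2 * trace (mf (X i \<omega>)))"
  proof
    fix \<omega>
    have "Ynl \<omega> = Vt (xb (X i \<omega>)) + lf (X i \<omega>) + 1/2 * (W i \<omega> \<bullet> (mf (X i \<omega>) *v W i \<omega>) - trace (mf (X i \<omega>) ** (outer (W i \<omega>) (W i \<omega>) - mat 1)))"
      unfolding Ynl_def Ytil_def DY_def Li Zb Mb Yb by (simp add: algebra_simps)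
    then show "Ynl \<omega> = Vt (xb (X i \<omega>)) + lf (X i \<omega>) + 1/2 * trace (mf (X i \<omega>))"
      by (simp add: quad)
  qed
  have iS: "\<And>j. j \<le> N \<Longrightarrow> integrable M (S j)" using sq_S sq_int[OF P] by auto
  have iVt: "integrable M (\<lambda>\<omega>. Vt (X (Suc i) \<omega>))" using sq_Vt sq_int[OF P] by auto
  have iYt: "integrable M Ytil" using sq_Ytil sq_int[OF P] by auto
  have iDY: "integrable M DY" using sq_DY sq_int[OF P] by auto
  have Sm[measurable]: "\<And>j. j \<le> N \<Longrightarrow> S j \<in> borel_measurable M" using iS by auto
  have Gsf: "\<And>j. j \<le> N \<Longrightarrow> sigma_finite_subalgebra M (G j)"
    unfolding G_def by (rule vimage_sfs) (rule Xm)
  interpret Gi: sigma_finite_subalgebra M "G i" using Gsf i_lt by simp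
  interpret Gs: sigma_finite_subalgebra M "G (Suc i)" using Gsf i_lt by simp
  have iY: "\<And>j. j \<le> N \<Longrightarrow> integrable M (Y j)"
  proof -
    fix j assume j: "j \<le> N"
    interpret Gj: sigma_finite_subalgebra M "G j" using Gsf j by simp
    show "integrable M (Y j)" unfolding Y_def using Gj.real_cond_exp_int(1)[OF iS[OF j]] by simp
  qed
  have XiG: "X i \<in> borel_measurable (G i)"
    unfolding G_def by (rule measurable_vimage_algebra1) (use Xm[of i] i_lt in \<open>auto simp: measurable_def\<close>)
  have iLi: "integrable M (L i)"
  proof -
    have "L i = (\<lambda>\<omega>. S i \<omega> - S (Suc i) \<omega>)"
      unfolding S_def using i_lt by (simp add: fun_eq_iff sum.atLeast_Suc_lessThan)
    then show ?thesis using iS[of i] iS[of "Suc i"] i_lt by simp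
  qed
  have LiG: "L i \<in> borel_measurable (G i)"
    unfolding Li using measurable_comp[OF XiG lfm] by (simp add: comp_def)
  have SiLs: "S i = (\<lambda>\<omega>. L i \<omega> + S (Suc i) \<omega>)"
    unfolding S_def using i_lt by (simp add: fun_eq_iff sum.atLeast_Suc_lessThan)
  have indXW: "indep_var borel (X i) borel (W i)"
  proof -
    have ind0: "indep_var (PiM {..<i} (\<lambda>_. borel)) (\<lambda>\<omega>. restrict (\<lambda>k. W k \<omega>) {..<i}) (PiM {i} (\<lambda>_. borel)) (\<lambda>\<omega>. restrict (\<lambda>k. W k \<omega>) {i})"
      by (rule indep_var_restrict[OF W_indep]) (use i_lt in auto)
    have am: "(\<lambda>c. trj f \<sigma> \<mu> dt (\<lambda>_. x0) (\<lambda>k c. c k) 0 i c) \<in> borel_measurable (PiM {..<i} (\<lambda>_. borel))"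
      by (rule trj_meas[OF f_meas sigma_meas mu_meas]) auto
    from indep_var_compose[OF ind0 am measurable_component_singleton[of i "{i}"]]
    have "indep_var borel ((\<lambda>c. trj f \<sigma> \<mu> dt (\<lambda>_. x0) (\<lambda>k c. c k) 0 i c) \<circ> (\<lambda>\<omega>. restrict (\<lambda>k. W k \<omega>) {..<i})) borel (W i)"
      by (simp add: comp_def)
    also have "(\<lambda>c. trj f \<sigma> \<mu> dt (\<lambda>_. x0) (\<lambda>k c. c k) 0 i c) \<circ> (\<lambda>\<omega>. restrict (\<lambda>k. W k \<omega>) {..<i}) = X i"
      unfolding Xtrj by (rule ext) (simp add: comp_def, rule trj_dep[symmetric], auto)
    finally show ?thesis .
  qed
  have h2int: "\<And>x. (\<integral>\<omega>'. h2 (x, W i \<omega>') \<partial>M) = - lf x"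
  proof -
    fix x
    note gv = gauss_vec[of "W i" "zf x" "mf x"]
    have c1: "indep_vars (\<lambda>_. borel) (\<lambda>k \<omega>. W i \<omega> $ k) UNIV" using W_comp_indep i_lt by auto
    have c2: "\<And>k. distributed M lborel (\<lambda>\<omega>. W i \<omega> $ k) (\<lambda>x. ennreal (std_normal_density x))" using W_gauss i_lt by auto
    have "(\<integral>\<omega>'. h2 (x, W i \<omega>') \<partial>M) = (\<integral>\<omega>'. - lf x \<partial>M) + (\<integral>\<omega>'. zf x \<bullet> W i \<omega>' + 1/2 * trace (mf x ** (outer (W i \<omega>') (W i \<omega>') - mat 1)) \<partial>M)"
      unfolding h2_def using gv(1)[OF c1 c2] by (simp add: Bochner_Integration.integral_add)
    then show "(\<integral>\<omega>'. h2 (x, W i \<omega>') \<partial>M) = - lf x" using gv(2)[OF c1 c2] by (simp add: prob_space)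
  qed
  have EDY: "AE \<omega> in M. real_cond_exp M (G i) DY \<omega> = - L i \<omega>"
  proof -
    have "AE \<omega> in M. real_cond_exp M (vimage_algebra (space M) (X i) borel) (\<lambda>\<omega>. h2 (X i \<omega>, W i \<omega>)) \<omega> = (\<integral>\<omega>'. h2 (X i \<omega>, W i \<omega>') \<partial>M)"
      by (rule freeze_cond_exp[OF indXW h2m]) (use iDY DYh in simp)
    then show ?thesis unfolding G_def DYh[symmetric] h2int Li by simp
  qed
  (* Markov part *)
  define C where "C = (\<lambda>\<omega>. restrict (\<lambda>k. W k \<omega>) {..<Suc i})"
  define B where "B = (\<lambda>\<omega>. restrict (\<lambda>k. W k \<omega>) {Suc i..<N})"
  have indCB: "indep_var (PiM {..<Suc i} (\<lambda>_. borel)) C (PiM {Suc i..<N} (\<lambda>_. borel)) B"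
    unfolding C_def B_def by (rule indep_var_restrict[OF W_indep]) (use i_lt in auto)
  have Cm[measurable]: "C \<in> measurable M (PiM {..<Suc i} (\<lambda>_. borel))"
    using indCB unfolding indep_var_distribution_eq by auto
  have Bm[measurable]: "B \<in> measurable M (PiM {Suc i..<N} (\<lambda>_. borel))"
    using indCB unfolding indep_var_distribution_eq by auto
  define F where "F = vimage_algebra (space M) C (PiM {..<Suc i} (\<lambda>_. borel))"
  interpret SF: sigma_finite_subalgebra M F unfolding F_def by (rule vimage_sfs[OF Cm])
  have subF: "subalgebra M F" unfolding F_def by (rule vimage_subalg[OF Cm])
  have CF: "C \<in> measurable F (PiM {..<Suc i} (\<lambda>_. borel))"
    unfolding F_def by (rule measurable_vimage_algebra1) (use Cm in \<open>auto simp: measurable_def\<close>)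
  have alm: "\<And>j. j \<le> Suc i \<Longrightarrow> (\<lambda>c. trj f \<sigma> \<mu> dt (\<lambda>_. x0) (\<lambda>k c. c k) 0 j c) \<in> borel_measurable (PiM {..<Suc i} (\<lambda>_. borel))"
    by (rule trj_meas[OF f_meas sigma_meas mu_meas]) auto
  have XC: "\<And>j \<omega>. j \<le> Suc i \<Longrightarrow> X j \<omega> = trj f \<sigma> \<mu> dt (\<lambda>_. x0) (\<lambda>k c. c k) 0 j (C \<omega>)"
    unfolding Xtrj C_def by (rule trj_dep) auto
  have XF: "\<And>j. j \<le> Suc i \<Longrightarrow> X j \<in> borel_measurable F"
  proof -
    fix j assume j: "j \<le> Suc i"
    have "X j = (\<lambda>c. trj f \<sigma> \<mu> dt (\<lambda>_. x0) (\<lambda>k c. c k) 0 j c) \<circ> C" using XC[OF j] by (simp add: fun_eq_iff)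
    then show "X j \<in> borel_measurable F" using measurable_comp[OF CF alm[OF j]] by simp
  qed
  have subFG: "\<And>j. j \<le> Suc i \<Longrightarrow> subalgebra F (G j)"
  proof -
    fix j assume j: "j \<le> Suc i"
    have "sets (G j) \<subseteq> sets F" unfolding G_def
      by (rule sets_image_in_sets) (auto simp: F_def XF[OF j, unfolded F_def])
    then show "subalgebra F (G j)" unfolding subalgebra_def G_def F_def by simp
  qed
  define T' where "T' = (\<lambda>m. trj f \<sigma> \<mu> dt fst (\<lambda>k (p::(real^'n) \<times> (nat \<Rightarrow> real^'n)). snd p k) (Suc i) m)"
  have T'm: "\<And>m. m \<le> N - Suc i \<Longrightarrow> T' m \<in> borel_measurable (borel \<Otimes>\<^sub>M PiM {Suc i..<N} (\<lambda>_. borel))"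
    unfolding T'_def by (rule trj_meas[OF f_meas sigma_meas mu_meas]) auto
  define Psi where "Psi = (\<lambda>p. (\<Sum>m<N - Suc i. ell (real (Suc i + m) * dt) (T' m p) (\<mu> (Suc i + m) (T' m p)) * dt) + g (T' (N - Suc i) p))"
  have Psim[measurable]: "Psi \<in> borel_measurable (borel \<Otimes>\<^sub>M PiM {Suc i..<N} (\<lambda>_. borel))"
  proof -
    have "(\<lambda>p. ell (real (Suc i + m) * dt) (T' m p) (\<mu> (Suc i + m) (T' m p)) * dt) \<in> borel_measurable (borel \<Otimes>\<^sub>M PiM {Suc i..<N} (\<lambda>_. borel))"
      if "m < N - Suc i" for m
      using that by (intro borel_measurable_times meas_f3[OF l_meas] measurable_comp[OF T'm mum, unfolded comp_def] T'm) auto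
    moreover have "(\<lambda>p. g (T' (N - Suc i) p)) \<in> borel_measurable (borel \<Otimes>\<^sub>M PiM {Suc i..<N} (\<lambda>_. borel))"
      using measurable_comp[OF T'm gm] by (simp add: comp_def)
    ultimately show ?thesis unfolding Psi_def by (intro borel_measurable_add borel_measurable_sum) auto
  qed
  have TX: "\<And>m \<omega>. m \<le> N - Suc i \<Longrightarrow> T' m (X (Suc i) \<omega>, B \<omega>) = X (Suc i + m) \<omega>"
    unfolding T'_def Xtrj trj_shift B_def by (rule trj_dep) auto
  have SPsi: "\<And>\<omega>. S (Suc i) \<omega> = Psi (X (Suc i) \<omega>, B \<omega>)"
  proof -
    fix \<omega>
    have "(\<Sum>k\<in>{Suc i..<N}. L k \<omega>) = (\<Sum>m<N - Suc i. L (Suc i + m) \<omega>)"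
      by (simp add: sum.atLeastLessThan_shift_0[of _ "Suc i" N] atLeast0LessThan)
    also have "\<dots> = (\<Sum>m<N - Suc i. ell (real (Suc i + m) * dt) (T' m (X (Suc i) \<omega>, B \<omega>)) (\<mu> (Suc i + m) (T' m (X (Suc i) \<omega>, B \<omega>))) * dt)"
      by (rule sum.cong) (auto simp: TX L_def)
    finally show "S (Suc i) \<omega> = Psi (X (Suc i) \<omega>, B \<omega>)"
      unfolding S_def Psi_def using TX[of "N - Suc i" \<omega>] i_lt by simp
  qed
  define h where "h = (\<lambda>p. Psi (trj f \<sigma> \<mu> dt (\<lambda>_. x0) (\<lambda>k c. c k) 0 (Suc i) (fst p), snd p))"
  have hm: "h \<in> borel_measurable (PiM {..<Suc i} (\<lambda>_. borel) \<Otimes>\<^sub>M PiM {Suc i..<N} (\<lambda>_. borel))"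
  proof -
    have "(\<lambda>p. (trj f \<sigma> \<mu> dt (\<lambda>_. x0) (\<lambda>k c. c k) 0 (Suc i) (fst p), snd p)) \<in> measurable (PiM {..<Suc i} (\<lambda>_. borel) \<Otimes>\<^sub>M PiM {Suc i..<N} (\<lambda>_. borel)) (borel \<Otimes>\<^sub>M PiM {Suc i..<N} (\<lambda>_. borel))"
      using alm[of "Suc i"] by (intro measurable_Pair measurable_comp[OF measurable_fst, unfolded comp_def]) auto
    from measurable_comp[OF this Psim] show ?thesis unfolding h_def by (simp add: comp_def)
  qed
  have hS: "(\<lambda>\<omega>. h (C \<omega>, B \<omega>)) = S (Suc i)"
    unfolding h_def by (rule ext) (simp only: fst_conv snd_conv XC[OF order_refl, symmetric] SPsi)
  define phi where "phi = (\<lambda>x. \<integral>\<omega>'. Psi (x, B \<omega>') \<partial>M)"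
  have phim[measurable]: "phi \<in> borel_measurable borel"
  proof -
    have "(\<lambda>(x, \<omega>'). Psi (x, B \<omega>')) \<in> borel_measurable (borel \<Otimes>\<^sub>M M)"
    proof -
      have "(\<lambda>p. (fst p, B (snd p))) \<in> measurable (borel \<Otimes>\<^sub>M M) (borel \<Otimes>\<^sub>M PiM {Suc i..<N} (\<lambda>_. borel))"
        by (intro measurable_Pair measurable_fst measurable_comp[OF measurable_snd Bm, unfolded comp_def])
      from measurable_comp[OF this Psim] show ?thesis by (simp add: comp_def case_prod_beta')
    qed
    then show ?thesis unfolding phi_def using borel_measurable_lebesgue_integral[of "\<lambda>x \<omega>'. Psi (x, B \<omega>')" borel] by simp
  qed
  have ESF: "AE \<omega> in M. real_cond_exp M F (S (Suc i)) \<omega> = phi (X (Suc i) \<omega>)"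
  proof -
    have "AE \<omega> in M. real_cond_exp M F (\<lambda>\<omega>. h (C \<omega>, B \<omega>)) \<omega> = (\<integral>\<omega>'. h (C \<omega>, B \<omega>') \<partial>M)"
      unfolding F_def by (rule freeze_cond_exp[OF indCB hm]) (use iS[of "Suc i"] i_lt hS in simp)
    moreover have hCB: "\<And>\<omega> \<omega>'. h (C \<omega>, B \<omega>') = Psi (X (Suc i) \<omega>, B \<omega>')"
      unfolding h_def by (simp only: fst_conv snd_conv XC[OF order_refl, symmetric])
    moreover have SP: "(\<lambda>\<omega>. Psi (X (Suc i) \<omega>, B \<omega>)) = S (Suc i)" by (rule ext) (simp only: SPsi)
    ultimately show ?thesis by (simp only: hCB SP phi_def)
  qed
  have phiXm: "(\<lambda>\<omega>. phi (X (Suc i) \<omega>)) \<in> borel_measurable M" using Xm[of "Suc i"] i_lt by simp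
  have phiXG: "(\<lambda>\<omega>. phi (X (Suc i) \<omega>)) \<in> borel_measurable (G (Suc i))"
  proof -
    have "X (Suc i) \<in> borel_measurable (G (Suc i))"
      unfolding G_def by (rule measurable_vimage_algebra1) (use Xm[of "Suc i"] i_lt in \<open>auto simp: measurable_def\<close>)
    from measurable_comp[OF this phim] show ?thesis by (simp add: comp_def)
  qed
  have iphiX: "integrable M (\<lambda>\<omega>. phi (X (Suc i) \<omega>))"
    by (rule integrable_cong_AE_imp[OF SF.real_cond_exp_int(1)[OF iS[of "Suc i"]] phiXm ESF]) (use i_lt in simp)
  have YsAE: "AE \<omega> in M. Y (Suc i) \<omega> = phi (X (Suc i) \<omega>)"
  proof -
    have a1: "AE \<omega> in M. real_cond_exp M (G (Suc i)) (real_cond_exp M F (S (Suc i))) \<omega> = real_cond_exp M (G (Suc i)) (S (Suc i)) \<omega>"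
      by (rule Gs.real_cond_exp_nested_subalg[OF subF subFG iS]) (use i_lt in auto)
    have a2: "AE \<omega> in M. real_cond_exp M (G (Suc i)) (real_cond_exp M F (S (Suc i))) \<omega> = real_cond_exp M (G (Suc i)) (\<lambda>\<omega>. phi (X (Suc i) \<omega>)) \<omega>"
      by (rule Gs.real_cond_exp_cong[OF ESF borel_measurable_cond_exp2 phiXm])
    have a3: "AE \<omega> in M. real_cond_exp M (G (Suc i)) (\<lambda>\<omega>. phi (X (Suc i) \<omega>)) \<omega> = phi (X (Suc i) \<omega>)"
      by (rule Gs.real_cond_exp_F_meas[OF iphiX phiXG])
    show ?thesis using a1 a2 a3 unfolding Y_def by auto
  qed
  have EYs: "AE \<omega> in M. real_cond_exp M (G i) (Y (Suc i)) \<omega> = real_cond_exp M (G i) (S (Suc i)) \<omega>"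
  proof -
    have YF: "AE \<omega> in M. Y (Suc i) \<omega> = real_cond_exp M F (S (Suc i)) \<omega>" using YsAE ESF by auto
    have b1: "AE \<omega> in M. real_cond_exp M (G i) (Y (Suc i)) \<omega> = real_cond_exp M (G i) (real_cond_exp M F (S (Suc i))) \<omega>"
      by (rule Gi.real_cond_exp_cong[OF YF]) (auto simp: Y_def intro: borel_measurable_cond_exp2 borel_measurable_cond_exp2)
    have b2: "AE \<omega> in M. real_cond_exp M (G i) (real_cond_exp M F (S (Suc i))) \<omega> = real_cond_exp M (G i) (S (Suc i)) \<omega>"
      by (rule Gi.real_cond_exp_nested_subalg[OF subF subFG iS]) (use i_lt in auto)
    show ?thesis using b1 b2 by auto
  qed
  have iYi: "integrable M (Y i)" using iY i_lt by simp
  have iYs: "integrable M (Y (Suc i))" using iY i_lt by simp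
  have iSs: "integrable M (S (Suc i))" using iS i_lt by simp
  have iSi: "integrable M (S i)" using iS i_lt by simp
  have Yim: "Y i \<in> borel_measurable (G i)" unfolding Y_def by (rule borel_measurable_cond_exp)
  have EYi: "AE \<omega> in M. real_cond_exp M (G i) (Y i) \<omega> = Y i \<omega>"
    by (rule Gi.real_cond_exp_F_meas[OF iYi Yim])
  have ESi: "AE \<omega> in M. Y i \<omega> = L i \<omega> + real_cond_exp M (G i) (S (Suc i)) \<omega>"
  proof -
    have c1: "AE \<omega> in M. real_cond_exp M (G i) (\<lambda>\<omega>. L i \<omega> + S (Suc i) \<omega>) \<omega> = real_cond_exp M (G i) (L i) \<omega> + real_cond_exp M (G i) (S (Suc i)) \<omega>"
      by (rule Gi.real_cond_exp_add[OF iLi iSs])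
    have c2: "AE \<omega> in M. real_cond_exp M (G i) (L i) \<omega> = L i \<omega>"
      by (rule Gi.real_cond_exp_F_meas[OF iLi LiG])
    show ?thesis using c1 c2 unfolding Y_def SiLs[symmetric] by auto
  qed
  define K where "K = (\<lambda>\<omega>. (Y i \<omega> - Y (Suc i) \<omega>) + DY \<omega>)"
  have iK: "integrable M K" unfolding K_def using iYi iYs iDY by simp
  have EK: "AE \<omega> in M. real_cond_exp M (G i) K \<omega> = 0"
  proof -
    have d1: "AE \<omega> in M. real_cond_exp M (G i) K \<omega> = real_cond_exp M (G i) (\<lambda>\<omega>. Y i \<omega> - Y (Suc i) \<omega>) \<omega> + real_cond_exp M (G i) DY \<omega>"
      unfolding K_def by (rule Gi.real_cond_exp_add) (use iYi iYs iDY in auto)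
    have d2: "AE \<omega> in M. real_cond_exp M (G i) (\<lambda>\<omega>. Y i \<omega> - Y (Suc i) \<omega>) \<omega> = real_cond_exp M (G i) (Y i) \<omega> - real_cond_exp M (G i) (Y (Suc i)) \<omega>"
      by (rule Gi.real_cond_exp_diff[OF iYi iYs])
    show ?thesis using d1 d2 EYi EYs ESi EDY by auto
  qed
  have iVtX: "integrable M (\<lambda>\<omega>. Vt (X (Suc i) \<omega>))" by (rule iVt)
  have idV: "integrable M dV" unfolding dV_def using iYs iVt by simp
  have idhot: "integrable M dhot" unfolding dhot_def using iVt iYt by simp
  have iYnl: "integrable M Ynl" unfolding Ynl_def using iYt iDY by simp
  have c1: "AE \<omega> in M. real_cond_exp M (G i) (\<lambda>\<omega>. Y i \<omega> - Yre \<omega>) \<omega> = real_cond_exp M (G i) dV \<omega>"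
  proof -
    have eq: "(\<lambda>\<omega>. Y i \<omega> - Yre \<omega>) = (\<lambda>\<omega>. dV \<omega> + K \<omega>)"
      unfolding Yre_def dV_def K_def by (simp add: fun_eq_iff)
    have "AE \<omega> in M. real_cond_exp M (G i) (\<lambda>\<omega>. dV \<omega> + K \<omega>) \<omega> = real_cond_exp M (G i) dV \<omega> + real_cond_exp M (G i) K \<omega>"
      by (rule Gi.real_cond_exp_add[OF idV iK])
    then show ?thesis using EK unfolding eq by auto
  qed
  have c2: "AE \<omega> in M. real_cond_exp M (G i) (\<lambda>\<omega>. Y i \<omega> - Ynl \<omega>) \<omega> = real_cond_exp M (G i) (\<lambda>\<omega>. dV \<omega> + dhot \<omega>) \<omega>"
  proof -
    have eq: "(\<lambda>\<omega>. Y i \<omega> - Ynl \<omega>) = (\<lambda>\<omega>. (dV \<omega> + dhot \<omega>) + K \<omega>)"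
      unfolding Ynl_def dV_def K_def dhot_def by (simp add: fun_eq_iff)
    have "AE \<omega> in M. real_cond_exp M (G i) (\<lambda>\<omega>. (dV \<omega> + dhot \<omega>) + K \<omega>) \<omega> = real_cond_exp M (G i) (\<lambda>\<omega>. dV \<omega> + dhot \<omega>) \<omega> + real_cond_exp M (G i) K \<omega>"
      by (rule Gi.real_cond_exp_add) (use idV idhot iK in auto)
    then show ?thesis using EK unfolding eq by auto
  qed
  have YnlG: "Ynl \<in> borel_measurable (G i)"
  proof -
    have qm: "(\<lambda>x. Vt (xb x) + lf x + 1/2 * trace (mf x)) \<in> borel_measurable borel" by measurable
    from measurable_comp[OF XiG qm] show ?thesis unfolding Ynl_eq by (simp add: comp_def)
  qed
  have EYnl: "AE \<omega> in M. real_cond_exp M (G i) Ynl \<omega> = Ynl \<omega>"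
    by (rule Gi.real_cond_exp_F_meas[OF iYnl YnlG])
  have Ynlm: "Ynl \<in> borel_measurable M" using iYnl by auto
  have dhotm: "dhot \<in> borel_measurable M" using idhot by auto
  have E0: "AE \<omega> in M. real_cond_exp M (G i) (\<lambda>_. 0) \<omega> = 0"
    by (rule Gi.real_cond_exp_F_meas) auto
  have c4: "AE \<omega> in M. cond_var M (G i) Ynl \<omega> = 0"
  proof -
    have "AE \<omega> in M. real_cond_exp M (G i) (\<lambda>\<omega>. (Ynl \<omega> - real_cond_exp M (G i) Ynl \<omega>)\<^sup>2) \<omega> = real_cond_exp M (G i) (\<lambda>_. 0) \<omega>"
      by (rule Gi.real_cond_exp_cong) (use EYnl Ynlm in \<open>auto intro: borel_measurable_cond_exp2\<close>)
    then show ?thesis using E0 unfolding cond_var_def by eventually_elim simp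
  qed
  have c3: "AE \<omega> in M. cond_var M (G i) Yre \<omega> = cond_var M (G i) dhot \<omega>"
  proof -
    have eq: "Yre = (\<lambda>\<omega>. dhot \<omega> + Ynl \<omega>)"
      unfolding Yre_def dhot_def Ynl_def by (simp add: fun_eq_iff)
    have "AE \<omega> in M. real_cond_exp M (G i) (\<lambda>\<omega>. dhot \<omega> + Ynl \<omega>) \<omega> = real_cond_exp M (G i) dhot \<omega> + real_cond_exp M (G i) Ynl \<omega>"
      by (rule Gi.real_cond_exp_add[OF idhot iYnl])
    then have ae: "AE \<omega> in M. (Yre \<omega> - real_cond_exp M (G i) Yre \<omega>)\<^sup>2 = (dhot \<omega> - real_cond_exp M (G i) dhot \<omega>)\<^sup>2"
      using EYnl unfolding eq by auto
    have "AE \<omega> in M. real_cond_exp M (G i) (\<lambda>\<omega>. (Yre \<omega> - real_cond_exp M (G i) Yre \<omega>)\<^sup>2) \<omega> = real_cond_exp M (G i) (\<lambda>\<omega>. (dhot \<omega> - real_cond_exp M (G i) dhot \<omega>)\<^sup>2) \<omega>"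
      by (rule Gi.real_cond_exp_cong[OF ae]) (use Ynlm dhotm eq in \<open>auto intro: borel_measurable_cond_exp2\<close>)
    then show ?thesis unfolding cond_var_def .
  qed
  show ?thesis using c1 c2 c3 c4 by blast
qed

end
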